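(* Let $c_1,c_2$ be positive constants and $h:=4(2\sqrt2 c_1+c_2^2)$. Then there exists a constant $\gamma_1>0$ such that, for all sufficiently large $n$, for every $(2n,d,b)$-clustered regular graph $G=(V,E)$, if each node $u\in V$ chooses a color in $\{red,blue\}$ uniformly at random and independently of the others, then $$\Pr\big[s^{(0)}_1\ge h\sqrt n \ \wedge\ -s^{(0)}_2\ge h\sqrt n\big]\ge\gamma_1.$$
   Context: A $(2n,d,b)$-clustered regular graph is a graph $G=(V,E)$ with $V=V_1\cup V_2$ disjoint, $|V_1|=|V_2|=n$, every node of degree $d$, every node of $V_1$ having exactly $b$ neighbors in $V_2$ and vice versa. For $i\in\{1,2\}$, $s^{(0)}_i$ denotes the number of red nodes in $V_i$ minus the number of blue nodes in $V_i$ in the initial coloring. *)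

theory Defs
  imports "HOL-Probability.Probability"
begin

definition clustered_regular ::
  "nat \<Rightarrow> nat \<Rightarrow> nat \<Rightarrow> nat set \<Rightarrow> nat set \<Rightarrow> (nat \<Rightarrow> nat \<Rightarrow> bool) \<Rightarrow> bool" where
  "clustered_regular n d b V1 V2 E \<longleftrightarrow>
     finite V1 \<and> finite V2 \<and> V1 \<inter> V2 = {} \<and> card V1 = n \<and> card V2 = n \<and>
     (\<forall>u v. E u v \<longrightarrow> E v u) \<and> (\<forall>u. \<not> E u u) \<and>
     (\<forall>u v. E u v \<longrightarrow> u \<in> V1 \<union> V2 \<and> v \<in> V1 \<union> V2) \<and>
     (\<forall>u \<in> V1 \<union> V2. card {v \<in> V1 \<union> V2. E u v} = d) \<and>
     (\<forall>u \<in> V1. card {v \<in> V2. E u v} = b) \<and>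
     (\<forall>u \<in> V2. card {v \<in> V1. E u v} = b)"

text \<open>Colorings: True = red, False = blue. s A col = #red in A - #blue in A.\<close>
definition spin_sum :: "nat set \<Rightarrow> (nat \<Rightarrow> bool) \<Rightarrow> int" where
  "spin_sum A col = int (card {u \<in> A. col u}) - int (card {u \<in> A. \<not> col u})"

definition uniform_coloring :: "nat set \<Rightarrow> (nat \<Rightarrow> bool) pmf" where
  "uniform_coloring V = pmf_of_set (V \<rightarrow>\<^sub>E (UNIV :: bool set))"

end

theory Submission
  imports Defs
begin
lemma binom_step: "(n choose (Suc k)) * Suc k = (n choose k) * (n - k)"
  by (metis binomial_absorb_comp binomial_absorption mult.commute)

lemma central_step: "(2*Suc m choose Suc m) * (Suc m) = (2*m choose m) * (2*(2*m+1))"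
proof -
  have a: "(Suc (Suc (2*m)) choose Suc m) * Suc m = (Suc (2*m) choose m) * Suc (Suc (2*m))"
    using Suc_times_binomial_eq[of "Suc (2*m)" m] by (metis mult.commute)
  have b: "(Suc (2*m) choose m) * Suc m = (2*m choose m) * Suc (2*m)"
  proof -
    have "(Suc (2*m) choose Suc m) * Suc m = (2*m choose m) * Suc (2*m)"
      using Suc_times_binomial_eq[of "2*m" m] by (metis mult.commute)
    moreover have "(Suc (2*m) choose Suc m) = (Suc (2*m) choose m)"
      using binomial_symmetric[of m "Suc (2*m)"] by simp
    ultimately show ?thesis by simp
  qed
  have a': "(2*m+2 choose (m+1)) * (m+1) = (2*m+1 choose m) * (2*m+2)" using a by simp
  have b': "(2*m+1 choose m) * (m+1) = (2*m choose m) * (2*m+1)" using b by simp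
  have "(2*m+2 choose (m+1)) * (m+1) * (m+1) = (2*m choose m) * (2*m+1) * (2*m+2)"
    using a' b' by (metis mult.assoc mult.commute)
  then have "(2*m+2 choose (m+1)) * (m+1) * (m+1) = (2*m choose m) * (2*(2*m+1)) * (m+1)"
    by (simp add: algebra_simps del: binomial_Suc_Suc)
  then have "(2*m+2 choose (m+1)) * (m+1) = (2*m choose m) * (2*(2*m+1))"
    by (metis mult_cancel2 add_is_0 one_neq_zero)
  moreover have "2 * Suc m = 2*m+2" "Suc m = m+1" by simp_all
  ultimately show ?thesis by (simp only:)
qed

lemma central: "m > 0 \<Longrightarrow> real (16^m) \<le> real ((2*m choose m)^2) * (4*m)"
proof (induction m rule: nat_induct_non_zero)
  case 1 then show ?case by (simp add: numeral_2_eq_2)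
next
  case (Suc m)
  define C where "C = real (2*m choose m)"
  define C' where "C' = real (2*Suc m choose Suc m)"
  have e: "C' * (m+1) = C * (2*(2*m+1))"
    unfolding C_def C'_def using arg_cong[OF central_step[of m], of real]
    unfolding of_nat_mult by (simp del: binomial_Suc_Suc)
  have ih: "16^m \<le> C^2 * (4*m)" using Suc.IH unfolding C_def by simp
  have "C'^2 * (4*(m+1)) * (m+1) = 4 * (C' * (m+1))^2"
    by (simp add: power2_eq_square algebra_simps)
  also have "\<dots> = 4 * (C * (2*(2*m+1)))^2" using e by simp
  also have "\<dots> = C^2 * 4 * (2*m+1)^2 * 4" by (simp add: power2_eq_square algebra_simps)
  also have "\<dots> \<ge> C^2 * (4*m) * 16 * (m+1)"
    by (simp add: power2_eq_square algebra_simps)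
  finally have X: "C'^2 * (4*(m+1)) * (m+1) \<ge> C^2 * (4*m) * 16 * (m+1)" .
  have "16^(Suc m) * real (m+1) = 16^m * (16 * real (m+1))" by simp
  also have "\<dots> \<le> (C^2 * (4*m)) * (16 * real (m+1))"
    by (rule mult_right_mono[OF ih]) simp
  also have "\<dots> = C^2 * (4*m) * 16 * (m+1)" by (simp add: algebra_simps)
  finally have "C'^2 * (4*(m+1)) * (m+1) \<ge> (16::real)^(Suc m) * real (m+1)" using X by linarith
  then have "C'^2 * (4*(m+1)) \<ge> (16::real)^(Suc m)" by (rule mult_right_le_imp_le) simp
  then show ?case unfolding C'_def by simp
qed
lemma ratio:
  fixes r :: real
  assumes "0 \<le> r" "\<forall>s<t. r * (real m + real s + 1) \<le> real m - real s"
  shows "real (2*m choose m) * r^t \<le> real (2*m choose (m+t))"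
  using assms(2)
proof (induction t)
  case 0 then show ?case by simp
next
  case (Suc t)
  have ih: "real (2*m choose m) * r^t \<le> real (2*m choose (m+t))" using Suc by auto
  have h: "r * (real m + real t + 1) \<le> real m - real t" using Suc.prems by auto
  have tm: "t \<le> m"
  proof (rule ccontr)
    assume "\<not> t \<le> m"
    then have "real m - real t < 0" by simp
    moreover have "0 \<le> r * (real m + real t + 1)" using assms(1) by simp
    ultimately show False using h by linarith
  qed
  have st: "real (2*m choose (m + Suc t)) * (real m + real t + 1) = real (2*m choose (m+t)) * (real m - real t)"
  proof -
    have "(2*m choose Suc (m+t)) * Suc (m+t) = (2*m choose (m+t)) * (2*m - (m+t))"
      by (rule binom_step)
    then have "real ((2*m choose Suc (m+t)) * Suc (m+t)) = real ((2*m choose (m+t)) * (2*m - (m+t)))"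
      by (simp only:)
    then show ?thesis using tm by (simp add: of_nat_diff algebra_simps)
  qed
  have "real (2*m choose m) * r^Suc t * (real m + real t + 1) = (real (2*m choose m) * r^t) * (r * (real m + real t + 1))"
    by (simp add: algebra_simps)
  also have "\<dots> \<le> real (2*m choose (m+t)) * (real m - real t)"
    using ih h assms(1) by (intro mult_mono) (auto simp: tm)
  also have "\<dots> = real (2*m choose (m + Suc t)) * (real m + real t + 1)" using st by simp
  finally show ?case by (rule mult_right_le_imp_le) simp
qed
lemma central_sqrt:
  assumes "m > 0"
  shows "4^m \<le> real (2*m choose m) * (2 * sqrt m)"
proof -
  have e1: "((4::real)^m)^2 = 16^m" by (simp add: power2_eq_square power_mult_distrib[symmetric])
  have e2: "(real (2*m choose m) * (2 * sqrt m))^2 = real ((2*m choose m)^2) * (4*m)"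
    by (simp add: power_mult_distrib)
  have a: "((4::real)^m)^2 \<le> (real (2*m choose m) * (2 * sqrt m))^2"
    using central[OF assms] unfolding e1 e2 by simp
  show ?thesis using power2_le_imp_le[OF a] by simp
qed
lemma core_n:
  fixes L :: real
  assumes L: "L > 0" and nN: "(6*L+20)^2 \<le> real n"
  shows "L * exp(-(24*L^2+72)) / 8 * 2^n \<le> (\<Sum>k\<in>{k. k \<le> n \<and> L* sqrt n \<le> 2*real k - real n}. real (n choose k))"
proof -
  define m where "m = n div 2"
  define T where "T = nat \<lceil>(L * sqrt n + 1)/2\<rceil>"
  define K where "K = exp(-(24*L^2+72))"
  have nm1: "2*m \<le> n" "n \<le> 2*m+1" unfolding m_def by auto
  have nm: "2*real m \<le> real n" "real n \<le> 2*real m+1" using nm1 by linarith+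
  have sq: "6*L+20 \<le> sqrt n"
  proof -
    have "sqrt ((6*L+20)^2) \<le> sqrt n" using nN real_sqrt_le_mono by blast
    then show ?thesis using L by simp
  qed
  have sn2: "sqrt n * sqrt n = real n" by simp
  have nbig: "(6*L+20) * sqrt n \<le> real n"
    using mult_right_mono[OF sq, of "sqrt n"] sn2 by simp
  have sqpos: "20 \<le> sqrt n" using sq L by linarith
  have nbig2: "6*L* sqrt n + 400 \<le> real n"
    using nbig mult_left_mono[OF sqpos, of 20] by (simp add: algebra_simps)
  have TT: "real T = of_int \<lceil>(L * sqrt n + 1)/2\<rceil>"
  proof -
    have "0 \<le> (L * sqrt n + 1)/2" using L by simp
    then have "0 \<le> \<lceil>(L * sqrt n + 1)/2\<rceil>" by linarith
    then show "real T = of_int \<lceil>(L * sqrt n + 1)/2\<rceil>" unfolding T_def by simp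
  qed
  have TL0: "(L * sqrt n + 1)/2 \<le> real T" using TT by linarith
  have TU0: "real T \<le> (L * sqrt n + 1)/2 + 1" using TT by linarith
  have y2: "2 * ((L * sqrt n + 1)/2) = L * sqrt n + 1" by simp
  have TL: "L * sqrt n + 1 \<le> 2 * real T" using TL0 y2 by linarith
  have TU: "2 * real T \<le> L * sqrt n + 3" using TU0 y2 by linarith
  have nb3: "6*(L* sqrt n) + 400 \<le> real n" using nbig2 by (simp add: algebra_simps)
  have T6a: "6*real T \<le> 3*(L* sqrt n) + 9" using TU by linarith
  have T6: "6 * real T \<le> real m" using T6a nm(2) nb3 by linarith
  have LS: "0 \<le> L * sqrt n" using L by simp
  have Tpos': "real T > 0" using TL LS by linarith
  then have Tpos: "T > 0" by simp
  have "real m > 0" using T6 Tpos' by linarith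
  then have mpos: "m > 0" by simp
  define r where "r = (real m - 2*T)/(real m + 2*T)"
  have den: "real m + 2*T > 0" using mpos by simp
  have r0: "0 < r" unfolding r_def using T6 Tpos' by (intro divide_pos_pos) linarith+
  have r1: "r \<le> 1" unfolding r_def using den by (simp add: divide_le_eq_1)
  have cond: "\<forall>s<2*T. r * (real m + real s + 1) \<le> real m - real s"
  proof (intro allI impI)
    fix s assume "s < 2*T"
    then have s1: "real s + 1 \<le> 2 * real T" by linarith
    have p: "0 \<le> real m * (4 * real T - 2 * real s - 1)" using s1 by simp
    have "(real m - 2*T) * (real m + real s + 1) \<le> (real m - real s) * (real m + 2*T)"
      using p s1 by (simp add: algebra_simps)
    then show "r * (real m + real s + 1) \<le> real m - real s"
      unfolding r_def using den by (simp add: divide_le_eq mult.commute)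
  qed
  have rK: "K \<le> r^(2*T)"
  proof -
    define x where "x = 1 - r"
    have x: "x = 4*T/(real m + 2*T)" unfolding x_def r_def using den by (simp add: field_simps)
    have x0: "0 \<le> x" using r1 x_def by simp
    have xh: "x \<le> 1/2" unfolding x using den T6 by (simp add: field_simps)
    have lnr: "- 2*x \<le> ln r"
    proof -
      have "- x - 2 * x^2 \<le> ln (1 - x)" by (rule ln_one_minus_pos_lower_bound[OF x0 xh])
      moreover have "2*x^2 \<le> x"
      proof -
        have "x * (2*x) \<le> x * 1" using x0 xh by (intro mult_left_mono) auto
        then show ?thesis by (simp add: power2_eq_square mult_ac)
      qed
      ultimately show ?thesis unfolding x_def by simp
    qed
    have e1: "r^(2*T) = exp (real (2*T) * ln r)"
    proof -
      have "r^(2*T) = exp (ln (r^(2*T)))" using r0 by simp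
      also have "ln (r^(2*T)) = real (2*T) * ln r" by (rule ln_realpow)
      finally show ?thesis .
    qed
    have q: "4 * real T * x \<le> 24*L^2+72"
    proof -
      have eqx: "4 * real T * x * (real m + 2*T) = 16 * real T^2" unfolding x using den by (simp add: field_simps power2_eq_square)
      have a: "16 * real T^2 \<le> 4 * (L* sqrt n + 3)^2"
      proof -
        have "(2*real T)^2 \<le> (L* sqrt n + 3)^2" using TU Tpos' by (intro power_mono) auto
        then show ?thesis by (simp add: power2_eq_square)
      qed
      have b: "(L* sqrt n + 3)^2 \<le> 2 * L^2 * real n + 18"
      proof -
        have "(L* sqrt n)^2 = L^2 * real n" by (simp add: power_mult_distrib)
        moreover have "0 \<le> (L* sqrt n - 3)^2" by simp
        ultimately show ?thesis by (simp add: power2_eq_square algebra_simps)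
      qed
      have c: "2 * L^2 * real n + 18 \<le> (6*L^2 + 18) * real m"
      proof -
        have "real n \<le> 3 * real m" using nm mpos by linarith
        then have "2 * L^2 * real n \<le> 2 * L^2 * (3 * real m)" by (intro mult_left_mono) auto
        moreover have "1 \<le> real m" using mpos by simp
        ultimately show ?thesis by (simp add: algebra_simps)
      qed
      have dd: "(24*L^2+72) * real m = 4*((6*L^2+18)*real m)" by (simp add: algebra_simps)
      have f16: "16 * real T^2 \<le> (24*L^2+72) * real m" using a b c dd by linarith
      have "4 * real T * x * (real m + 2*T) \<le> (24*L^2+72) * real m" unfolding eqx by (rule f16)
      also have "\<dots> \<le> (24*L^2+72) * (real m + 2*T)" by (intro mult_left_mono) auto
      finally have "4 * real T * x * (real m + 2*T) \<le> (24*L^2+72) * (real m + 2*T)" .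
      then show ?thesis using den by simp
    qed
    have m1: "real (2*T) * (-2*x) \<le> real (2*T) * ln r"
      using lnr by (intro mult_left_mono) auto
    have m2: "real (2*T) * (-2*x) = -(4*real T*x)" by (simp add: algebra_simps)
    have "-(24*L^2+72) \<le> real (2*T) * ln r" using q m1 m2 by linarith
    then show ?thesis unfolding K_def e1 by simp
  qed
  define C where "C = real (2*m choose m)"
  have K0: "0 \<le> K" unfolding K_def by simp
  have C0: "0 \<le> C" unfolding C_def by simp
  have Cbound: "C * K \<le> real (n choose k)" if k: "k \<in> {m+T..<m+2*T}" for k
  proof -
    define t where "t = k - m"
    have kt: "k = m + t" "t < 2*T" using k t_def by auto
    have "C * K \<le> C * r^t"
    proof -
      have "K \<le> r^(2*T)" by (rule rK)
      also have "r^(2*T) \<le> r^t" using kt r0 r1 by (intro power_decreasing) auto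
      finally show ?thesis using C0 by (intro mult_left_mono) auto
    qed
    also have "\<dots> \<le> real (2*m choose (m+t))" unfolding C_def
      using r0 cond kt by (intro ratio) auto
    also have "\<dots> \<le> real (n choose (m+t))" using nm1 binomial_right_mono by simp
    finally show ?thesis using kt by simp
  qed
  have fin: "finite {k. k \<le> n \<and> L* sqrt n \<le> 2*real k - real n}"
    by (rule finite_subset[of _ "{..n}"]) auto
  have sub: "{m+T..<m+2*T} \<subseteq> {k. k \<le> n \<and> L* sqrt n \<le> 2*real k - real n}"
  proof
    fix k assume k: "k \<in> {m+T..<m+2*T}"
    have "2*real T \<le> real m" using T6 Tpos' by linarith
    then have "2*T \<le> m" by linarith
    then have kn: "k \<le> n" using k nm1 by auto
    have "real m + real T \<le> real k" using k by auto
    then have "L* sqrt n \<le> 2*real k - real n" using TL nm by linarith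
    then show "k \<in> {k. k \<le> n \<and> L* sqrt n \<le> 2*real k - real n}" using kn by simp
  qed
  have "real T * (C * K) \<le> (\<Sum>k\<in>{m+T..<m+2*T}. real (n choose k))"
    using sum_bounded_below[of "{m+T..<m+2*T}" "C*K" "\<lambda>k. real (n choose k)"] Cbound by simp
  also have "\<dots> \<le> (\<Sum>k\<in>{k. k \<le> n \<and> L* sqrt n \<le> 2*real k - real n}. real (n choose k))"
    by (rule sum_mono2[OF fin sub]) auto
  finally have S: "real T * (C * K) \<le> (\<Sum>k\<in>{k. k \<le> n \<and> L* sqrt n \<le> 2*real k - real n}. real (n choose k))" .
  have p2: "(2::real)^n \<le> 2 * 4^m"
  proof -
    have "(2::real)^n \<le> 2^(2*m+1)" using nm1 by (intro power_increasing) auto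
    also have "\<dots> = 2 * 4^m" by (simp add: power_mult)
    finally show ?thesis .
  qed
  have Tm: "L * sqrt m \<le> 2 * real T"
  proof -
    have "sqrt m \<le> sqrt n" using nm1 by simp
    then have "L * sqrt m \<le> L * sqrt n" using L by (intro mult_left_mono) auto
    then show ?thesis using TL by linarith
  qed
  have cs: "4^m \<le> C * (2 * sqrt m)" unfolding C_def by (rule central_sqrt[OF mpos])
  have "L * 4^m \<le> L * (C * (2 * sqrt m))" using cs L by (intro mult_left_mono) auto
  also have "\<dots> = C * 2 * (L * sqrt m)" by (simp add: algebra_simps)
  also have "\<dots> \<le> C * 2 * (2 * real T)" using Tm C0 by (intro mult_left_mono) auto
  finally have A: "L * 4^m \<le> 4 * (real T * C)" by (simp add: algebra_simps)
  have "L * K / 8 * 2^n \<le> L * K / 8 * (2 * 4^m)" using p2 L K0 by (intro mult_left_mono) auto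
  also have "\<dots> = K / 4 * (L * 4^m)" by (simp add: algebra_simps)
  also have "\<dots> \<le> K / 4 * (4 * (real T * C))" using A K0 by (intro mult_left_mono) auto
  also have "\<dots> = real T * (C * K)" by (simp add: algebra_simps)
  finally show ?thesis using S unfolding K_def by linarith
qed
lemma core:
  fixes L :: real
  assumes L: "L > 0"
  shows "\<exists>\<gamma>>0. \<exists>N. \<forall>n\<ge>N. \<gamma> * 2^n \<le> (\<Sum>k\<in>{k. k \<le> n \<and> L* sqrt n \<le> 2*real k - real n}. real (n choose k))"
proof (intro exI[of _ "L * exp(-(24*L^2+72)) / 8"] conjI exI[of _ "nat \<lceil>(6*L+20)^2\<rceil>"] allI impI)
  show "0 < L * exp(-(24*L^2+72)) / 8" using L by simp
next
  fix n assume "nat \<lceil>(6*L+20)^2\<rceil> \<le> n"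
  then have "(6*L+20)^2 \<le> real n" by linarith
  then show "L * exp(-(24*L^2+72)) / 8 * 2^n \<le> (\<Sum>k\<in>{k. k \<le> n \<and> L* sqrt n \<le> 2*real k - real n}. real (n choose k))"
    by (rule core_n[OF L])
qed

lemma sym_sum:
  "(\<Sum>k\<in>{k. k \<le> n \<and> L* sqrt n \<le> real n - 2*real k}. real (n choose k)) =
   (\<Sum>k\<in>{k. k \<le> n \<and> L* sqrt n \<le> 2*real k - real n}. real (n choose k))"
proof (rule sum.reindex_bij_witness[of _ "\<lambda>k. n - k" "\<lambda>k. n - k"])
  fix k assume "k \<in> {k. k \<le> n \<and> L* sqrt n \<le> 2*real k - real n}"
  then show "n - (n - k) = k" "n - k \<in> {k. k \<le> n \<and> L* sqrt n \<le> real n - 2*real k}"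
    by (auto simp: of_nat_diff)
next
  fix k assume "k \<in> {k. k \<le> n \<and> L* sqrt n \<le> real n - 2*real k}"
  then show "n - (n - k) = k" "n - k \<in> {k. k \<le> n \<and> L* sqrt n \<le> 2*real k - real n}"
    "real (n choose (n - k)) = real (n choose k)"
    by (auto simp: of_nat_diff binomial_symmetric[symmetric])
qed

lemma card_subsets_in:
  assumes "finite V" "card V = n"
  shows "card {S. S \<subseteq> V \<and> card S \<in> K} = (\<Sum>k\<in>K \<inter> {..n}. n choose k)"
proof -
  have eq: "{S. S \<subseteq> V \<and> card S \<in> K} = (\<Union>k\<in>K \<inter> {..n}. {S. S \<subseteq> V \<and> card S = k})"
    using assms card_mono by fastforce
  have "card (\<Union>k\<in>K \<inter> {..n}. {S. S \<subseteq> V \<and> card S = k}) = (\<Sum>k\<in>K \<inter> {..n}. card {S. S \<subseteq> V \<and> card S = k})"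
    by (rule card_UN_disjoint) (use assms in auto)
  also have "\<dots> = (\<Sum>k\<in>K \<inter> {..n}. n choose k)" using n_subsets[OF assms(1)] assms(2) by simp
  finally show ?thesis using eq by simp
qed
theorem lemma1:
  fixes c1 c2 :: real
  assumes "c1 > 0" and "c2 > 0"
  defines "h \<equiv> 4 * (2 * sqrt 2 * c1 + c2 ^ 2)"
  shows "\<exists>\<gamma>1 > 0. \<exists>N. \<forall>n \<ge> N. \<forall>d b V1 V2 E.
           clustered_regular n d b V1 V2 E \<longrightarrow>
           measure_pmf.prob (uniform_coloring (V1 \<union> V2))
             {col. real_of_int (spin_sum V1 col) \<ge> h * sqrt (real n) \<and>
                   - real_of_int (spin_sum V2 col) \<ge> h * sqrt (real n)} \<ge> \<gamma>1"
proof -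
  have hpos: "h > 0" unfolding h_def using assms by (simp add: add_pos_pos)
  obtain \<gamma> N where g: "\<gamma> > 0" and gN: "\<And>n. n \<ge> N \<Longrightarrow> \<gamma> * 2^n \<le> (\<Sum>k\<in>{k. k \<le> n \<and> h * sqrt n \<le> 2*real k - real n}. real (n choose k))"
    using core[OF hpos] by blast
  show ?thesis
  proof (intro exI[of _ "\<gamma>^2"] conjI exI[of _ N] allI impI)
    show "\<gamma>^2 > 0" using g by simp
  next
    fix n d b V1 V2 E assume nN: "N \<le> n" and cr: "clustered_regular n d b V1 V2 E"
    then have f1: "finite V1" and f2: "finite V2" and dis: "V1 \<inter> V2 = {}" and c1: "card V1 = n" and c2: "card V2 = n"
      unfolding clustered_regular_def by (blast, blast, blast, blast, blast)
    define V where "V = V1 \<union> V2"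
    define P where "P = V \<rightarrow>\<^sub>E (UNIV :: bool set)"
    define Ev where "Ev = {col. real_of_int (spin_sum V1 col) \<ge> h * sqrt (real n) \<and>
                   - real_of_int (spin_sum V2 col) \<ge> h * sqrt (real n)}"
    define K1 where "K1 = {k. k \<le> n \<and> h * sqrt n \<le> 2*real k - real n}"
    define K2 where "K2 = {k. k \<le> n \<and> h * sqrt n \<le> real n - 2*real k}"
    define A1 where "A1 = {S. S \<subseteq> V1 \<and> card S \<in> K1}"
    define A2 where "A2 = {S. S \<subseteq> V2 \<and> card S \<in> K2}"
    define g where "g = (\<lambda>(S,T). (\<lambda>u. if u \<in> V then u \<in> S \<union> T else undefined))"
    have finV: "finite V" unfolding V_def using f1 f2 by simp
    have cV: "card V = 2*n" unfolding V_def using card_Un_disjoint[OF f1 f2 dis] c1 c2 by simp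
    have finP: "finite P" unfolding P_def using finV by (simp add: finite_PiE)
    have cP: "card P = 2^(2*n)" unfolding P_def using finV cV by (simp add: card_PiE)
    have Pne: "P \<noteq> {}" using cP by auto
    have prob: "measure_pmf.prob (uniform_coloring V) Ev = card (P \<inter> Ev) / card P"
      unfolding uniform_coloring_def P_def[symmetric] using finP Pne by (simp add: measure_pmf_of_set)
    have cA1: "card A1 = (\<Sum>k\<in>K1. n choose k)"
    proof -
      have "K1 \<inter> {..n} = K1" unfolding K1_def by auto
      then show ?thesis unfolding A1_def using card_subsets_in[OF f1 c1, of K1] by simp
    qed
    have cA2: "card A2 = (\<Sum>k\<in>K2. n choose k)"
    proof -
      have "K2 \<inter> {..n} = K2" unfolding K2_def by auto
      then show ?thesis unfolding A2_def using card_subsets_in[OF f2 c2, of K2] by simp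
    qed
    have inj: "inj_on g (A1 \<times> A2)"
    proof (rule inj_onI)
      fix x y assume x: "x \<in> A1 \<times> A2" and y: "y \<in> A1 \<times> A2" and e: "g x = g y"
      obtain S T where xs: "x = (S,T)" by (cases x)
      obtain S' T' where ys: "y = (S',T')" by (cases y)
      have sub: "S \<subseteq> V1" "T \<subseteq> V2" "S' \<subseteq> V1" "T' \<subseteq> V2"
        using x y xs ys unfolding A1_def A2_def by auto
      have "\<And>u. u \<in> V \<Longrightarrow> (u \<in> S \<union> T) = (u \<in> S' \<union> T')"
      proof -
        fix u assume "u \<in> V"
        have "g (S,T) u = g (S',T') u" using e xs ys by simp
        then show "(u \<in> S \<union> T) = (u \<in> S' \<union> T')" using \<open>u \<in> V\<close> unfolding g_def by simp
      qed
      then have "S = S'" "T = T'" using sub dis unfolding V_def by (auto simp: set_eq_iff) (blast+)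
      then show "x = y" using xs ys by simp
    qed
    have img: "g ` (A1 \<times> A2) \<subseteq> P \<inter> Ev"
    proof
      fix c assume "c \<in> g ` (A1 \<times> A2)"
      then obtain S T where ST: "S \<in> A1" "T \<in> A2" and c: "c = g (S,T)" by auto
      have sub: "S \<subseteq> V1" "T \<subseteq> V2" and k1: "card S \<in> K1" and k2: "card T \<in> K2"
        using ST unfolding A1_def A2_def by auto
      have cP': "c \<in> P" unfolding P_def c g_def by auto
      have s1: "{u \<in> V1. c u} = S" using sub dis unfolding c g_def V_def by auto
      have s1': "{u \<in> V1. \<not> c u} = V1 - S" using sub dis unfolding c g_def V_def by auto
      have s2: "{u \<in> V2. c u} = T" using sub dis unfolding c g_def V_def by auto
      have s2': "{u \<in> V2. \<not> c u} = V2 - T" using sub dis unfolding c g_def V_def by auto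
      have cs: "card S \<le> n" "card T \<le> n" using card_mono[OF f1 sub(1)] card_mono[OF f2 sub(2)] c1 c2 by simp_all
      have sp1: "real_of_int (spin_sum V1 c) = 2 * real (card S) - real n"
        unfolding spin_sum_def s1 s1' using card_Diff_subset[OF finite_subset[OF sub(1) f1] sub(1)] c1 cs
        by (simp add: of_nat_diff)
      have sp2: "real_of_int (spin_sum V2 c) = 2 * real (card T) - real n"
        unfolding spin_sum_def s2 s2' using card_Diff_subset[OF finite_subset[OF sub(2) f2] sub(2)] c2 cs
        by (simp add: of_nat_diff)
      have "c \<in> Ev" unfolding Ev_def using sp1 sp2 k1 k2 unfolding K1_def K2_def by auto
      then show "c \<in> P \<inter> Ev" using cP' by simp
    qed
    have "card A1 * card A2 \<le> card (P \<inter> Ev)"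
    proof -
      have "card (g ` (A1 \<times> A2)) \<le> card (P \<inter> Ev)" using img finP by (intro card_mono) auto
      then show ?thesis using card_image[OF inj] by (simp add: card_cartesian_product)
    qed
    then have lb: "real (card A1) * real (card A2) \<le> real (card (P \<inter> Ev))"
      by (metis of_nat_le_iff of_nat_mult)
    have s1: "\<gamma> * 2^n \<le> real (card A1)" using gN[OF nN] cA1 unfolding K1_def by simp
    have s2: "\<gamma> * 2^n \<le> real (card A2)" using gN[OF nN] cA2 sym_sum[of n h] unfolding K2_def by simp
    have "(\<gamma> * 2^n) * (\<gamma> * 2^n) \<le> real (card A1) * real (card A2)"
      using s1 s2 g by (intro mult_mono) auto
    then have "\<gamma>^2 * 2^(2*n) \<le> real (card (P \<inter> Ev))" using lb
      by (simp add: power2_eq_square power_mult power_mult_distrib algebra_simps)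
    then have "\<gamma>^2 \<le> real (card (P \<inter> Ev)) / real (card P)"
      unfolding cP by (simp add: field_simps)
    then show "\<gamma>^2 \<le> measure_pmf.prob (uniform_coloring (V1 \<union> V2)) {col. real_of_int (spin_sum V1 col) \<ge> h * sqrt (real n) \<and>
                   - real_of_int (spin_sum V2 col) \<ge> h * sqrt (real n)}"
      using prob unfolding V_def Ev_def by simp
  qed
qed
end
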